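(* Let $G=(V,E)$ be a multigraph with $n$ vertices and $m$ edges. Consider a process that performs $n-1$ edge contractions, with arbitrarily many edge deletions allowed between consecutive contractions; let $G_k$ denote the graph just before the $k$-th contraction (so $G_1=G$ if no deletions precede it), and let $u_kv_k$ be the edge of $G_k$ contracted at step $k$, for $k\in[n-1]$. Suppose that for some $\alpha>0$, the cost of the $k$-th contraction is at most $\alpha\cdot\min\{\deg_{G_k}(u_k),\deg_{G_k}(v_k)\}$ for every $k$. Then the total cost of all contractions is $O(\alpha m\log n)$; equivalently, $\sum_{k=1}^{n-1}\min\{\deg_{G_k}(u_k),\deg_{G_k}(v_k)\}=O(m\log n)$.
   Context: Contracting an edge $uv$ identifies $u$ and $v$ into a single vertex and removes the edges between $u$ and $v$; other edges (possibly becoming parallel) are kept with endpoints updated. Degrees count incident edges with multiplicity. *)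

theory Defs
  imports Complex_Main "HOL-Library.Multiset"
begin

text \<open>A finite loopless multigraph on vertex set V: edges form a multiset of
  2-element vertex sets (parallel edges = repeated elements).\<close>
definition multigraph :: "nat set \<Rightarrow> nat set multiset \<Rightarrow> bool" where
  "multigraph V E \<longleftrightarrow> finite V \<and> (\<forall>e \<in># E. e \<subseteq> V \<and> card e = 2)"

definition deg :: "nat set multiset \<Rightarrow> nat \<Rightarrow> nat" where
  "deg E x = size (filter_mset (\<lambda>e. x \<in> e) E)"

definition contract :: "nat set multiset \<Rightarrow> nat \<Rightarrow> nat \<Rightarrow> nat set multiset" where
  "contract E u v = image_mset ((`) (\<lambda>x. if x = v then u else x))
                      (filter_mset (\<lambda>e. e \<noteq> {u, v}) E)"

text \<open>A process of card V - 1 contractions with arbitrary edge deletions in between.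
  (VS k, ES k) is the graph G_k just before the k-th contraction, k = 1..n-1,
  and {us k, vs k} is the edge contracted at step k.\<close>
definition contraction_process ::
  "nat set \<Rightarrow> nat set multiset \<Rightarrow> (nat \<Rightarrow> nat set) \<Rightarrow> (nat \<Rightarrow> nat set multiset)
     \<Rightarrow> (nat \<Rightarrow> nat) \<Rightarrow> (nat \<Rightarrow> nat) \<Rightarrow> bool" where
  "contraction_process V E VS ES us vs \<longleftrightarrow>
     VS 1 = V \<and> ES 1 \<subseteq># E \<and>
     (\<forall>k \<in> {1..<card V}.
        us k \<noteq> vs k \<and> {us k, vs k} \<in># ES k \<and>
        (k + 1 < card V \<longrightarrow>
           VS (k + 1) = VS k - {vs k} \<and>
           ES (k + 1) \<subseteq># contract (ES k) (us k) (vs k)))"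

end

theory Submission
  imports Defs
begin

definition Lw :: "nat \<Rightarrow> nat \<Rightarrow> real" where
  "Lw n t = log 2 (real n) - log 2 (real t)"

definition gw :: "nat \<Rightarrow> (nat \<Rightarrow> nat) \<Rightarrow> nat set \<Rightarrow> real" where
  "gw n s e = 1 + (\<Sum>x\<in>e. Lw n (s x))"

lemma Lw_nonneg: "1 \<le> t \<Longrightarrow> t \<le> n \<Longrightarrow> 0 \<le> Lw n t"
  unfolding Lw_def by simp

lemma Lw_anti: "0 < a \<Longrightarrow> a \<le> b \<Longrightarrow> Lw n b \<le> Lw n a"
  unfolding Lw_def by simp

lemma Lw_double: assumes "0 < a" "a \<le> b" shows "Lw n (a+b) \<le> Lw n a - 1"
proof -
  have "log 2 (real (a+b)) \<ge> log 2 (2 * real a)" using assms by simp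
  also have "log 2 (2 * real a) = 1 + log 2 (real a)" using assms by (simp add: log_mult)
  finally show ?thesis unfolding Lw_def by simp
qed

lemma edge_step:
  fixes s :: "nat \<Rightarrow> nat"
  assumes e2: "card e = 2" and ne: "e \<noteq> {u, v}" and uv: "u \<noteq> v"
    and pos: "\<forall>x\<in>e. 1 \<le> s x" and pu: "1 \<le> s u" and pv: "1 \<le> s v"
  shows "gw n (s(u := s u + s v)) ((\<lambda>x. if x = v then u else x) ` e)
     \<le> gw n s e - (if u \<in> e \<and> s u \<le> s v then 1 else 0) - (if v \<in> e \<and> \<not> s u \<le> s v then 1 else 0)"
proof -
  obtain a b where ab: "e = {a,b}" "a \<noteq> b" using e2 card_2_iff by metis
  have d1: "Lw n (s u + s v) \<le> Lw n (s u) - (if s u \<le> s v then 1 else 0)"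
    using Lw_double[of "s u" "s v" n] Lw_anti[of "s u" "s u + s v" n] pu by auto
  have d2: "Lw n (s u + s v) \<le> Lw n (s v) - (if \<not> s u \<le> s v then 1 else 0)"
    using Lw_double[of "s v" "s u" n] Lw_anti[of "s v" "s u + s v" n] pv by (auto simp: add.commute)
  show ?thesis
  proof (cases "u \<in> e")
    case True
    then have "v \<notin> e" using ne ab uv by auto
    then obtain w where w: "e = {u, w}" "w \<noteq> u" "w \<noteq> v" using True ab by auto
    have img: "(\<lambda>x. if x = v then u else x) ` e = e" using w uv by auto
    show ?thesis unfolding img gw_def using w d1 uv \<open>v \<notin> e\<close> by auto
  next
    case False
    show ?thesis
    proof (cases "v \<in> e")
      case True
      then obtain w where w: "e = {v, w}" "w \<noteq> u" "w \<noteq> v" using False ab by auto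
      have img: "(\<lambda>x. if x = v then u else x) ` e = {u, w}" using w by auto
      show ?thesis unfolding img gw_def using w d2 uv False by auto
    next
      case False2: False
      have img: "(\<lambda>x. if x = v then u else x) ` e = e" using False2 by auto
      have "(\<Sum>x\<in>e. Lw n ((s(u := s u + s v)) x)) = (\<Sum>x\<in>e. Lw n (s x))"
        by (rule sum.cong) (use False in auto)
      then show ?thesis unfolding img gw_def using False False2 by auto
    qed
  qed
qed

definition Psi :: "nat \<Rightarrow> (nat \<Rightarrow> nat) \<Rightarrow> nat set multiset \<Rightarrow> real" where
  "Psi n s F = (\<Sum>e\<in>#F. gw n s e)"

lemma sum_mset_indicator: "(\<Sum>e\<in>#M. (if Q e then 1 else 0::real)) = real (size (filter_mset Q M))"
  by (induction M) auto

lemma sum_mset_diff3: "(\<Sum>e\<in>#M. f e - g e - h e) = (\<Sum>e\<in>#M. f e) - (\<Sum>e\<in>#M. g e) - (\<Sum>e\<in>#M. (h e::real))"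
  by (induction M) auto

lemma gw_ge1: assumes "finite e" "\<forall>x\<in>e. 1 \<le> s x \<and> s x \<le> n" shows "1 \<le> gw n s e"
proof -
  have "0 \<le> (\<Sum>x\<in>e. Lw n (s x))" by (rule sum_nonneg) (use assms Lw_nonneg in auto)
  then show ?thesis unfolding gw_def by simp
qed

lemma Psi_sub: assumes "F' \<subseteq># G" "\<forall>e\<in>#G. 0 \<le> gw n s e" shows "Psi n s F' \<le> Psi n s G"
proof -
  obtain H where H: "G = F' + H" using assms(1) by (auto simp: subset_mset.le_iff_add)
  have "0 \<le> Psi n s H" unfolding Psi_def
    using sum_mset_mono[of H "\<lambda>_. 0::real" "gw n s"] assms(2) H by auto
  then show ?thesis using H unfolding Psi_def by simp
qed

lemma step:
  fixes s :: "nat \<Rightarrow> nat"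
  assumes edges: "\<forall>e\<in>#F. e \<subseteq> W \<and> card e = 2" and uW: "u \<in> W" and vW: "v \<in> W" and uv: "u \<noteq> v"
    and pos: "\<forall>x\<in>W. 1 \<le> s x \<and> s x \<le> n" and suv: "s u + s v \<le> n"
    and sub: "F' \<subseteq># contract F u v"
  shows "real (min (deg F u) (deg F v)) + Psi n (s(u := s u + s v)) F' \<le> Psi n s F"
proof -
  define s' where "s' = s(u := s u + s v)"
  define f where "f = (\<lambda>x. if x = v then u else x)"
  define P where "P = (\<lambda>e::nat set. e \<noteq> {u, v})"
  define du where "du = size (filter_mset (\<lambda>e. u \<in> e) (filter_mset P F))"
  define dv where "dv = size (filter_mset (\<lambda>e. v \<in> e) (filter_mset P F))"
  define c where "c = size (filter_mset (\<lambda>e. \<not> P e) F)"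
  have fin: "finite e" if "e \<in># F" for e using edges that card_ge_0_finite[of e] by auto
  have con: "contract F u v = image_mset ((`) f) (filter_mset P F)"
    unfolding contract_def f_def P_def by simp
  have A: "Psi n s' F' \<le> Psi n s' (contract F u v)"
  proof (rule Psi_sub[OF sub], rule ballI)
    fix e' assume "e' \<in># contract F u v"
    then obtain e where e: "e \<in># F" "e' = f ` e" unfolding con by auto
    have "\<forall>x\<in>e'. 1 \<le> s' x \<and> s' x \<le> n"
      using e edges pos suv uW unfolding s'_def f_def by fastforce
    moreover have "finite e'" using e fin by simp
    ultimately have "1 \<le> gw n s' e'" by (rule gw_ge1[rotated])
    then show "0 \<le> gw n s' e'" by simp
  qed
  define Iu where "Iu = (\<lambda>e. if u \<in> e \<and> s u \<le> s v then 1 else (0::real))"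
  define Iv where "Iv = (\<lambda>e. if v \<in> e \<and> \<not> s u \<le> s v then 1 else (0::real))"
  have "Psi n s' (contract F u v) = (\<Sum>e\<in>#filter_mset P F. gw n s' (f ` e))"
    unfolding Psi_def con by (simp add: multiset.map_comp comp_def)
  also have "\<dots> \<le> (\<Sum>e\<in>#filter_mset P F. gw n s e - Iu e - Iv e)"
  proof (rule sum_mset_mono)
    fix e assume "e \<in># filter_mset P F"
    then have "e \<in># F" "e \<noteq> {u,v}" unfolding P_def by auto
    have e2: "card e = 2" and eW: "e \<subseteq> W" using edges \<open>e \<in># F\<close> by auto
    have pe: "\<forall>x\<in>e. 1 \<le> s x" using eW pos by auto
    have pu: "1 \<le> s u" "1 \<le> s v" using pos uW vW by auto
    show "gw n s' (f ` e) \<le> gw n s e - Iu e - Iv e"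
      unfolding s'_def f_def Iu_def Iv_def
      by (rule edge_step[OF e2 \<open>e \<noteq> {u,v}\<close> uv pe pu])
  qed
  also have "\<dots> = Psi n s (filter_mset P F) - (\<Sum>e\<in>#filter_mset P F. Iu e) - (\<Sum>e\<in>#filter_mset P F. Iv e)"
    unfolding Psi_def by (rule sum_mset_diff3)
  also have "(\<Sum>e\<in>#filter_mset P F. Iu e) = (if s u \<le> s v then real du else 0)"
    unfolding Iu_def du_def by (auto simp: sum_mset_indicator)
  also have "(\<Sum>e\<in>#filter_mset P F. Iv e) = (if s u \<le> s v then 0 else real dv)"
    unfolding Iv_def dv_def by (auto simp: sum_mset_indicator)
  finally have B: "Psi n s' (contract F u v) \<le> Psi n s (filter_mset P F) - (if s u \<le> s v then real du else real dv)"
    by (auto split: if_splits)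
  have C1: "Psi n s F = Psi n s (filter_mset P F) + Psi n s (filter_mset (\<lambda>e. \<not> P e) F)"
    unfolding Psi_def by (metis multiset_partition image_mset_union sum_mset.union)
  have "(\<Sum>e\<in>#filter_mset (\<lambda>e. \<not> P e) F. (1::real)) \<le> Psi n s (filter_mset (\<lambda>e. \<not> P e) F)"
    unfolding Psi_def
  proof (rule sum_mset_mono)
    fix e assume "e \<in># filter_mset (\<lambda>e. \<not> P e) F"
    then have "e = {u,v}" unfolding P_def by auto
    then show "1 \<le> gw n s e" using gw_ge1[of e s n] pos uW vW by auto
  qed
  then have C2: "real c \<le> Psi n s (filter_mset (\<lambda>e. \<not> P e) F)" unfolding c_def by simp
  have Du: "deg F u \<le> du + c"
  proof -
    have "deg F u = size (filter_mset P (filter_mset (\<lambda>e. u \<in> e) F)) + size (filter_mset (\<lambda>e. \<not> P e) (filter_mset (\<lambda>e. u \<in> e) F))"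
      unfolding deg_def by (metis multiset_partition size_union)
    also have "filter_mset P (filter_mset (\<lambda>e. u \<in> e) F) = filter_mset (\<lambda>e. u \<in> e) (filter_mset P F)"
      by (simp add: filter_filter_mset conj_commute)
    also have "size (filter_mset (\<lambda>e. \<not> P e) (filter_mset (\<lambda>e. u \<in> e) F)) \<le> c"
      unfolding c_def filter_filter_mset by (rule size_mset_mono, rule filter_mset_mono_strong) auto
    finally show ?thesis unfolding du_def by simp
  qed
  have Dv: "deg F v \<le> dv + c"
  proof -
    have "deg F v = size (filter_mset P (filter_mset (\<lambda>e. v \<in> e) F)) + size (filter_mset (\<lambda>e. \<not> P e) (filter_mset (\<lambda>e. v \<in> e) F))"
      unfolding deg_def by (metis multiset_partition size_union)
    also have "filter_mset P (filter_mset (\<lambda>e. v \<in> e) F) = filter_mset (\<lambda>e. v \<in> e) (filter_mset P F)"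
      by (simp add: filter_filter_mset conj_commute)
    also have "size (filter_mset (\<lambda>e. \<not> P e) (filter_mset (\<lambda>e. v \<in> e) F)) \<le> c"
      unfolding c_def filter_filter_mset by (rule size_mset_mono, rule filter_mset_mono_strong) auto
    finally show ?thesis unfolding dv_def by simp
  qed
  have "real (min (deg F u) (deg F v)) \<le> (if s u \<le> s v then real du else real dv) + real c"
    using Du Dv by (auto simp: min_def)
  then show ?thesis using A B C1 C2 unfolding s'_def by linarith
qed


primrec clus :: "(nat \<Rightarrow> nat) \<Rightarrow> (nat \<Rightarrow> nat) \<Rightarrow> nat \<Rightarrow> nat \<Rightarrow> nat" where
  "clus us vs 0 = (\<lambda>x. 1)"
| "clus us vs (Suc k) = (if k = 0 then (\<lambda>x. 1)
     else (clus us vs k)(us k := clus us vs k (us k) + clus us vs k (vs k)))"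

lemma clus_step: "1 \<le> k \<Longrightarrow> clus us vs (k+1) = (clus us vs k)(us k := clus us vs k (us k) + clus us vs k (vs k))"
  by simp

lemma contract_edge:
  assumes "e' \<in># contract F u v" "\<forall>e\<in>#F. e \<subseteq> W \<and> card e = 2" "u \<in> W" "u \<noteq> v"
  shows "e' \<subseteq> W - {v} \<and> card e' = 2"
proof -
  obtain e where e: "e \<in># F" "e \<noteq> {u,v}" "e' = (\<lambda>x. if x = v then u else x) ` e"
    using assms(1) unfolding contract_def by auto
  obtain a b where ab: "e = {a,b}" "a \<noteq> b" using assms(2) e(1) card_2_iff by metis
  have eW: "e \<subseteq> W" using assms(2) e(1) by auto
  show ?thesis
  proof (cases "v \<in> e")
    case True
    then obtain w where w: "e = {v,w}" "w \<noteq> v" using ab by auto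
    then have "w \<noteq> u" using e(2) by auto
    then have "e' = {u, w}" using e(3) w by auto
    then show ?thesis using w \<open>w \<noteq> u\<close> eW assms(3,4) by auto
  next
    case False
    then have "e' = e" using e(3) by auto
    then show ?thesis using False eW ab by auto
  qed
qed

lemma invariant:
  assumes mg: "multigraph V E" and cp: "contraction_process V E VS ES us vs"
    and j: "1 \<le> j" "j < card V"
  shows "VS j \<subseteq> V \<and> (\<forall>e\<in>#ES j. e \<subseteq> VS j \<and> card e = 2) \<and>
         (\<forall>x\<in>VS j. 1 \<le> clus us vs j x) \<and> (\<Sum>x\<in>VS j. clus us vs j x) = card V"
  using j
proof (induction j rule: nat_induct_at_least)
  case base
  have "ES 1 \<subseteq># E" "VS 1 = V" using cp unfolding contraction_process_def by auto
  then show ?case using mg unfolding multigraph_def by (auto dest: mset_subset_eqD)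
next
  case (Suc j)
  let ?s = "clus us vs j" let ?u = "us j" let ?v = "vs j"
  have jr: "j \<in> {1..<card V}" using Suc by auto
  have P: "?u \<noteq> ?v" "{?u, ?v} \<in># ES j" "VS (j+1) = VS j - {?v}"
    "ES (j+1) \<subseteq># contract (ES j) ?u ?v"
    using cp jr Suc.prems unfolding contraction_process_def by auto
  have IH: "VS j \<subseteq> V" "\<forall>e\<in>#ES j. e \<subseteq> VS j \<and> card e = 2" "\<forall>x\<in>VS j. 1 \<le> ?s x"
     "(\<Sum>x\<in>VS j. ?s x) = card V" using Suc by auto
  have uW: "?u \<in> VS j" and vW: "?v \<in> VS j" using IH(2) P(2) by auto
  have finV: "finite V" using mg unfolding multigraph_def by auto
  have fin: "finite (VS j)" using IH(1) finV finite_subset by auto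
  have cs: "clus us vs (Suc j) = ?s(?u := ?s ?u + ?s ?v)" using clus_step[OF Suc.hyps] by simp
  have A: "VS (Suc j) \<subseteq> V" using P(3) IH(1) by auto
  have B: "\<forall>e\<in>#ES (Suc j). e \<subseteq> VS (Suc j) \<and> card e = 2"
    using contract_edge[OF _ IH(2) uW P(1)] P(3,4) by (auto dest: mset_subset_eqD)
  have C: "\<forall>x\<in>VS (Suc j). 1 \<le> clus us vs (Suc j) x" using cs IH(3) P(3) by auto
  have "(\<Sum>x\<in>VS (Suc j). clus us vs (Suc j) x) = (\<Sum>x\<in>VS j - {?v}. (?s(?u := ?s ?u + ?s ?v)) x)"
    using P(3) cs by simp
  also have "\<dots> = (?s ?u + ?s ?v) + (\<Sum>x\<in>VS j - {?v} - {?u}. (?s(?u := ?s ?u + ?s ?v)) x)"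
    using fin uW P(1) by (subst sum.remove[of _ ?u]) auto
  also have "(\<Sum>x\<in>VS j - {?v} - {?u}. (?s(?u := ?s ?u + ?s ?v)) x) = (\<Sum>x\<in>VS j - {?v} - {?u}. ?s x)"
    by (rule sum.cong) auto
  also have "(?s ?u + ?s ?v) + (\<Sum>x\<in>VS j - {?v} - {?u}. ?s x) = (\<Sum>x\<in>VS j. ?s x)"
  proof -
    have "(\<Sum>x\<in>VS j. ?s x) = ?s ?v + (\<Sum>x\<in>VS j - {?v}. ?s x)" using fin vW by (subst sum.remove[of _ ?v]) auto
    also have "(\<Sum>x\<in>VS j - {?v}. ?s x) = ?s ?u + (\<Sum>x\<in>VS j - {?v} - {?u}. ?s x)"
      using fin uW P(1) by (subst sum.remove[of _ ?u]) auto
    finally show ?thesis by simp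
  qed
  finally show ?case using A B C IH(4) by simp
qed

lemma potential:
  assumes mg: "multigraph V E" and cp: "contraction_process V E VS ES us vs"
    and j: "1 \<le> j" "j < card V"
  shows "(\<Sum>k=1..<j. real (min (deg (ES k) (us k)) (deg (ES k) (vs k))))
          + Psi (card V) (clus us vs j) (ES j) \<le> Psi (card V) (clus us vs 1) (ES 1)"
  using j
proof (induction j rule: nat_induct_at_least)
  case base
  then show ?case by simp
next
  case (Suc j)
  let ?s = "clus us vs j" let ?u = "us j" let ?v = "vs j" let ?n = "card V"
  have jr: "j \<in> {1..<card V}" using Suc by auto
  have P: "?u \<noteq> ?v" "{?u, ?v} \<in># ES j" "VS (j+1) = VS j - {?v}"
    "ES (j+1) \<subseteq># contract (ES j) ?u ?v"
    using cp jr Suc.prems unfolding contraction_process_def by auto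
  have I: "VS j \<subseteq> V" "\<forall>e\<in>#ES j. e \<subseteq> VS j \<and> card e = 2" "\<forall>x\<in>VS j. 1 \<le> ?s x"
     "(\<Sum>x\<in>VS j. ?s x) = card V" using invariant[OF mg cp Suc.hyps] Suc.prems by auto
  have uW: "?u \<in> VS j" and vW: "?v \<in> VS j" using I(2) P(2) by auto
  have finV: "finite V" using mg unfolding multigraph_def by auto
  have fin: "finite (VS j)" using I(1) finV finite_subset by auto
  have le: "?s x \<le> ?n" if "x \<in> VS j" for x
    using member_le_sum[of x "VS j" ?s] that fin I(4) by auto
  have suv: "?s ?u + ?s ?v \<le> ?n"
  proof -
    have "(\<Sum>x\<in>{?u,?v}. ?s x) \<le> (\<Sum>x\<in>VS j. ?s x)"
      by (rule sum_mono2) (use fin uW vW in auto)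
    then show ?thesis using P(1) I(4) by simp
  qed
  have cs: "clus us vs (Suc j) = ?s(?u := ?s ?u + ?s ?v)" using clus_step[OF Suc.hyps] by simp
  have st: "real (min (deg (ES j) ?u) (deg (ES j) ?v)) + Psi ?n (clus us vs (Suc j)) (ES (Suc j)) \<le> Psi ?n ?s (ES j)"
    unfolding cs using step[OF I(2) uW vW P(1) _ suv] P(4) I(3) le by auto
  have "Suc j < card V" using Suc by simp
  then have "j < card V" by simp
  have "(\<Sum>k=1..<Suc j. real (min (deg (ES k) (us k)) (deg (ES k) (vs k))))
      = (\<Sum>k=1..<j. real (min (deg (ES k) (us k)) (deg (ES k) (vs k)))) + real (min (deg (ES j) ?u) (deg (ES j) ?v))"
    using Suc.hyps by simp
  then show ?case using Suc.IH[OF \<open>j < card V\<close>] st by linarith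
qed

lemma mainbound:
  assumes mg: "multigraph V E" and cp: "contraction_process V E VS ES us vs" and n2: "2 \<le> card V"
  shows "real (\<Sum>k = 1..<card V. min (deg (ES k) (us k)) (deg (ES k) (vs k)))
          \<le> real (size E) * (1 + 2 * log 2 (real (card V)))"
proof -
  let ?n = "card V" let ?m = "\<lambda>k. min (deg (ES k) (us k)) (deg (ES k) (vs k))"
  have j: "1 \<le> ?n - 1" "?n - 1 < ?n" using n2 by auto
  have pot: "(\<Sum>k=1..<?n-1. real (?m k)) + Psi ?n (clus us vs (?n-1)) (ES (?n-1)) \<le> Psi ?n (clus us vs 1) (ES 1)"
    using potential[OF mg cp j] .
  have I: "\<forall>e\<in>#ES (?n-1). e \<subseteq> VS (?n-1) \<and> card e = 2" "\<forall>x\<in>VS (?n-1). 1 \<le> clus us vs (?n-1) x"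
     "(\<Sum>x\<in>VS (?n-1). clus us vs (?n-1) x) = ?n" "VS (?n-1) \<subseteq> V"
    using invariant[OF mg cp j] by blast+
  have finV: "finite V" using mg unfolding multigraph_def by auto
  have fin: "finite (VS (?n-1))" using I(4) finV finite_subset by auto
  have last: "real (?m (?n-1)) \<le> Psi ?n (clus us vs (?n-1)) (ES (?n-1))"
  proof -
    have a1: "?m (?n-1) \<le> deg (ES (?n-1)) (us (?n-1))" by (rule min.cobounded1)
    have a2: "deg (ES (?n-1)) (us (?n-1)) \<le> size (ES (?n-1))" unfolding deg_def by (rule size_filter_mset_lesseq)
    have a3: "(\<Sum>e\<in>#ES (?n-1). (1::real)) \<le> Psi ?n (clus us vs (?n-1)) (ES (?n-1))" unfolding Psi_def
    proof (rule sum_mset_mono)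
      fix e assume e: "e \<in># ES (?n-1)"
      have eV: "e \<subseteq> VS (?n-1)" using e I(1) by blast
      have "finite e" using eV fin finite_subset by blast
      moreover have "\<forall>x\<in>e. 1 \<le> clus us vs (?n-1) x \<and> clus us vs (?n-1) x \<le> ?n"
      proof
        fix x assume "x \<in> e"
        then have x: "x \<in> VS (?n-1)" using eV by blast
        have "clus us vs (?n-1) x \<le> (\<Sum>y\<in>VS (?n-1). clus us vs (?n-1) y)"
          by (rule member_le_sum[OF x _ fin]) simp
        then show "1 \<le> clus us vs (?n-1) x \<and> clus us vs (?n-1) x \<le> ?n" using I(2,3) x by simp
      qed
      ultimately show "1 \<le> gw ?n (clus us vs (?n-1)) e" by (rule gw_ge1)
    qed
    have a4: "(\<Sum>e\<in>#ES (?n-1). (1::real)) = real (size (ES (?n-1)))" by simp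
    show ?thesis using a1 a2 a3 a4 by linarith
  qed
  have first: "Psi ?n (clus us vs 1) (ES 1) = real (size (ES 1)) * (1 + 2 * log 2 (real ?n))"
  proof -
    have j1: "1 \<le> (1::nat)" "1 < card V" using n2 by auto
    have I1: "\<forall>e\<in>#ES 1. card e = 2" using invariant[OF mg cp j1] by blast
    have "Psi ?n (clus us vs 1) (ES 1) = (\<Sum>e\<in>#ES 1. (1 + 2 * log 2 (real ?n)))"
      unfolding Psi_def
    proof (rule arg_cong[where f = sum_mset], rule image_mset_cong)
      fix e assume "e \<in># ES 1"
      then have "card e = 2" using I1 by auto
      then show "gw ?n (clus us vs 1) e = 1 + 2 * log 2 (real ?n)"
        unfolding gw_def Lw_def by simp
    qed
    then show ?thesis by simp
  qed
  have sz: "size (ES 1) \<le> size E" using cp unfolding contraction_process_def by (auto intro: size_mset_mono)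
  have lg: "0 \<le> 1 + 2 * log 2 (real ?n)" using n2 by simp
  have "(\<Sum>k=1..<?n. real (?m k)) = (\<Sum>k=1..<?n-1. real (?m k)) + real (?m (?n-1))"
  proof -
    obtain p where p: "?n = Suc p" "1 \<le> p" using n2 by (cases ?n) auto
    show ?thesis unfolding p(1) using p(2) by simp
  qed
  also have "\<dots> \<le> real (size (ES 1)) * (1 + 2 * log 2 (real ?n))" using pot last first by linarith
  also have "\<dots> \<le> real (size E) * (1 + 2 * log 2 (real ?n))" using sz lg by (simp add: mult_right_mono)
  finally show ?thesis by simp
qed

theorem lemmaC3:
  shows "\<exists>C::real > 0. \<forall>V E VS ES us vs (\<alpha>::real) (cost::nat \<Rightarrow> real).
     multigraph V E \<and> contraction_process V E VS ES us vs \<and> \<alpha> > 0 \<and>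
     (\<forall>k \<in> {1..<card V}. cost k \<le> \<alpha> * real (min (deg (ES k) (us k)) (deg (ES k) (vs k))))
     \<longrightarrow>
       (\<Sum>k = 1..<card V. cost k) \<le> C * \<alpha> * real (size E) * ln (real (card V)) \<and>
       real (\<Sum>k = 1..<card V. min (deg (ES k) (us k)) (deg (ES k) (vs k)))
          \<le> C * real (size E) * ln (real (card V))"
proof (rule exI[of _ "3 / ln 2"], intro conjI allI impI)
  show "0 < 3 / ln (2::real)" by simp
next
  fix V E VS ES us vs and \<alpha> :: real and cost :: "nat \<Rightarrow> real"
  assume H: "multigraph V E \<and> contraction_process V E VS ES us vs \<and> \<alpha> > 0 \<and>
     (\<forall>k \<in> {1..<card V}. cost k \<le> \<alpha> * real (min (deg (ES k) (us k)) (deg (ES k) (vs k))))"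
  let ?C = "3 / ln (2::real)" let ?n = "card V" let ?m = "\<lambda>k. min (deg (ES k) (us k)) (deg (ES k) (vs k))"
  have S: "real (\<Sum>k = 1..<?n. ?m k) \<le> ?C * real (size E) * ln (real ?n)"
  proof (cases "2 \<le> ?n")
    case True
    have "real (\<Sum>k = 1..<?n. ?m k) \<le> real (size E) * (1 + 2 * log 2 (real ?n))"
      using mainbound H True by blast
    also have "\<dots> \<le> real (size E) * (3 * log 2 (real ?n))"
    proof -
      have "1 \<le> log 2 (real ?n)" using True by simp
      then show ?thesis by (intro mult_left_mono) auto
    qed
    also have "\<dots> = ?C * real (size E) * ln (real ?n)" by (simp add: log_def)
    finally show ?thesis .
  next
    case False
    then have "?n = 0 \<or> ?n = 1" by auto
    then show ?thesis by auto
  qed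
  have "(\<Sum>k = 1..<?n. cost k) \<le> (\<Sum>k = 1..<?n. \<alpha> * real (?m k))"
    using H by (intro sum_mono) auto
  also have "\<dots> = \<alpha> * real (\<Sum>k = 1..<?n. ?m k)" by (simp add: sum_distrib_left)
  also have "\<dots> \<le> \<alpha> * (?C * real (size E) * ln (real ?n))" using S H by (intro mult_left_mono) auto
  finally show "(\<Sum>k = 1..<?n. cost k) \<le> ?C * \<alpha> * real (size E) * ln (real ?n)" by (simp add: ac_simps)
  show "real (\<Sum>k = 1..<?n. ?m k) \<le> ?C * real (size E) * ln (real ?n)" using S .
qed

end
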